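(* Let $C$ be a strictly convex subset of a topological real vector space, $f:C\to\mathbb{R}$ a strictly sub-convex function, $D\subseteq\mathbb{R}$ a subset containing $f(C)$, and $\varphi:D\to\mathbb{R}$ a non-decreasing function that is lower semi-continuous (for the subspace topology of $D$). Then $g:C\to\mathbb{R}$, $g(x)=\varphi(f(x))$, is strictly sub-convex.
   Context: Topological real vector spaces are not assumed Hausdorff. $S_r(h)=\{x: h(x)\le r\}$ for a real function $h$. For a subset $S$, $\mathrm{Aff}(S)$ is its affine hull; $\mathrm{ri}(S)$, $\mathrm{rc}(S)$ are the interior and closure of $S$ in the subspace topology of $\mathrm{Aff}(S)$. $]x,y[=\{(1-t)x+ty: t\in[0,1]\}\setminus\{x,y\}$. A set is strictly convex if for any two distinct $x,y$ in its relative closure, $]x,y[$ lies in its relative interior. A function $f$ on $C$ is strictly sub-convex if $S_r(f)$ is strictly convex for every $r\in\mathbb{R}$. *)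

theory Defs
  imports "HOL-Analysis.Analysis"
begin

definition tvs_topology :: "'a::real_vector topology \<Rightarrow> bool" where
  "tvs_topology T \<longleftrightarrow> topspace T = UNIV
     \<and> continuous_map (prod_topology T T) T (\<lambda>(x, y). x + y)
     \<and> continuous_map (prod_topology euclideanreal T) T (\<lambda>(a, x). a *\<^sub>R x)"

definition rel_int :: "'a::real_vector topology \<Rightarrow> 'a set \<Rightarrow> 'a set" where
  "rel_int T S = (subtopology T (affine hull S)) interior_of S"

definition rel_clos :: "'a::real_vector topology \<Rightarrow> 'a set \<Rightarrow> 'a set" where
  "rel_clos T S = (subtopology T (affine hull S)) closure_of S"

definition strictly_convex_set :: "'a::real_vector topology \<Rightarrow> 'a set \<Rightarrow> bool" where
  "strictly_convex_set T S \<longleftrightarrow>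
     (\<forall>x\<in>rel_clos T S. \<forall>y\<in>rel_clos T S. x \<noteq> y \<longrightarrow> open_segment x y \<subseteq> rel_int T S)"

definition sublevel :: "'a set \<Rightarrow> ('a \<Rightarrow> real) \<Rightarrow> real \<Rightarrow> 'a set" where
  "sublevel C h r = {x \<in> C. h x \<le> r}"

definition strictly_subconvex :: "'a::real_vector topology \<Rightarrow> 'a set \<Rightarrow> ('a \<Rightarrow> real) \<Rightarrow> bool" where
  "strictly_subconvex T C f \<longleftrightarrow> (\<forall>r::real. strictly_convex_set T (sublevel C f r))"

definition lsc_on :: "real set \<Rightarrow> (real \<Rightarrow> real) \<Rightarrow> bool" where
  "lsc_on D \<phi> \<longleftrightarrow> (\<forall>a. openin (top_of_set D) {t \<in> D. a < \<phi> t})"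

end

theory Submission
  imports Defs
begin

lemma scs_empty: "strictly_convex_set T {}"
  unfolding strictly_convex_set_def rel_clos_def by simp

theorem mainTheorem7:
  fixes T :: "'a::real_vector topology"
    and C :: "'a set" and f :: "'a \<Rightarrow> real"
    and D :: "real set" and \<phi> :: "real \<Rightarrow> real"
  assumes "tvs_topology T"
    and "strictly_convex_set T C"
    and "strictly_subconvex T C f"
    and "f ` C \<subseteq> D"
    and "mono_on D \<phi>"
    and "lsc_on D \<phi>"
  shows "strictly_subconvex T C (\<lambda>x. \<phi> (f x))"
  unfolding strictly_subconvex_def
proof
  fix r :: real
  define E where "E = {t\<in>D. \<phi> t \<le> r}"
  have fD: "\<And>x. x \<in> C \<Longrightarrow> f x \<in> D" using assms(4) by auto
  have mono: "\<And>a b. a \<in> D \<Longrightarrow> b \<in> D \<Longrightarrow> a \<le> b \<Longrightarrow> \<phi> a \<le> \<phi> b"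
    using assms(5) by (simp add: mono_onD)
  show "strictly_convex_set T (sublevel C (\<lambda>x. \<phi> (f x)) r)"
  proof (cases "E = {}")
    case True
    then have "sublevel C (\<lambda>x. \<phi> (f x)) r = {}"
      unfolding sublevel_def E_def using fD by auto
    then show ?thesis using scs_empty by simp
  next
    case ne: False
    show ?thesis
    proof (cases "bdd_above E")
      case False
      have "sublevel C (\<lambda>x. \<phi> (f x)) r = C"
      proof -
        have "\<phi> (f x) \<le> r" if "x \<in> C" for x
        proof -
          from False obtain e where e: "e \<in> E" "\<not> e \<le> f x"
            unfolding bdd_above_def by auto
          then have "\<phi> (f x) \<le> \<phi> e" using mono fD[OF that] unfolding E_def by auto
          then show ?thesis using e unfolding E_def by auto
        qed
        then show ?thesis unfolding sublevel_def by auto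
      qed
      then show ?thesis using assms(2) by simp
    next
      case bdd: True
      define s where "s = Sup E"
      have sE: "s \<in> E" if "s \<in> D"
      proof (rule ccontr)
        assume "s \<notin> E"
        then have "r < \<phi> s" using that unfolding E_def by auto
        have "openin (top_of_set D) {t \<in> D. r < \<phi> t}" using assms(6) unfolding lsc_on_def by auto
        moreover have "s \<in> {t \<in> D. r < \<phi> t}" using \<open>r < \<phi> s\<close> that by simp
        ultimately have "\<exists>ep>0. \<forall>x'\<in>D. dist x' s < ep \<longrightarrow> x' \<in> {t \<in> D. r < \<phi> t}"
          unfolding openin_euclidean_subtopology_iff by (elim conjE bspec)
        then obtain ep where ep: "ep > 0" "\<And>x'. x' \<in> D \<Longrightarrow> dist x' s < ep \<Longrightarrow> x' \<in> {t \<in> D. r < \<phi> t}"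
          by blast
        have "s - ep < Sup E" using ep s_def by simp
        then obtain e where e: "e \<in> E" "s - ep < e" using less_cSup_iff[OF ne bdd] by auto
        have "e \<le> s" using cSup_upper[OF e(1) bdd] s_def by simp
        then have "dist e s < ep" using e by (simp add: dist_real_def)
        then have "r < \<phi> e" using ep(2)[of e] e(1) unfolding E_def by auto
        then show False using e(1) unfolding E_def by auto
      qed
      have "sublevel C (\<lambda>x. \<phi> (f x)) r = sublevel C f s"
      proof -
        have "\<phi> (f x) \<le> r \<longleftrightarrow> f x \<le> s" if x: "x \<in> C" for x
        proof
          assume "\<phi> (f x) \<le> r"
          then have "f x \<in> E" using fD[OF x] unfolding E_def by auto
          then show "f x \<le> s" using cSup_upper[OF _ bdd] s_def by simp
        next
          assume le: "f x \<le> s"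
          show "\<phi> (f x) \<le> r"
          proof (cases "f x = s")
            case True
            then have "s \<in> E" using sE fD[OF x] by auto
            then show ?thesis using True unfolding E_def by auto
          next
            case False
            then have "f x < Sup E" using le s_def by simp
            then obtain e where e: "e \<in> E" "f x < e" using less_cSup_iff[OF ne bdd] by auto
            then have "\<phi> (f x) \<le> \<phi> e" using mono fD[OF x] unfolding E_def by auto
            then show ?thesis using e unfolding E_def by auto
          qed
        qed
        then show ?thesis unfolding sublevel_def by auto
      qed
      then show ?thesis using assms(3) unfolding strictly_subconvex_def by simp
    qed
  qed
qed

end
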